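(* Let $\mu$ be a probability measure on $\mathbb{C}$ with compact support such that $0 \in \operatorname{supp}(\mu)$, and let $X_1, X_2, \ldots$ be iid with distribution $\mu$. For each $n$ let $\xi_1^{(n)}, \ldots, \xi_{k_n}^{(n)}$ be deterministic complex numbers with $k_n \le K$ for a constant $K$ independent of $n$. Fix $\varepsilon>0$ and an integer $s\ge 0$, and suppose that for all sufficiently large $n$, $\xi_1^{(n)},\ldots,\xi_s^{(n)}$ lie outside $N_\mu(3\varepsilon)$ and $\xi_{s+1}^{(n)},\ldots,\xi_{k_n}^{(n)}$ lie in $N_\mu(\varepsilon)$. Let $D_{\mathrm{in}} := \operatorname{diag}(X_1, \ldots, X_{n-k_n}, \xi_{s+1}^{(n)}, \ldots, \xi_{k_n}^{(n)})$, an $(n-s)\times(n-s)$ matrix, let $J_{n-s}$ be the $(n-s)\times(n-s)$ all-ones matrix, $I$ the identity, and $\mathbf{1}$ the all-ones vector of length $n-s$. Then there is a deterministic constant $C>0$ such that, almost surely, for all sufficiently large $n$: the matrix $zI - D_{\mathrm{in}} + \frac{1}{n} D_{\mathrm{in}} J_{n-s}$ is invertible for every $z \notin N_\mu(2\varepsilon)$; the function \[ z \mapsto \frac{1}{n}\mathbf{1}^{\mathrm T}\left(zI - D_{\mathrm{in}} + \tfrac{1}{n}D_{\mathrm{in}}J_{n-s}\right)^{-1} D_{\mathrm{in}}\mathbf{1} \] is analytic on $\mathbb{C}\setminus \overline{N_\mu(2\varepsilon)}$ (outside $N_\mu(2\varepsilon)$); and \[ \sup_{z \in \mathbb{C}\setminus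 N_\mu(2\varepsilon)} \left| \frac{1}{n}\mathbf{1}^{\mathrm T}\left(zI - D_{\mathrm{in}} + \tfrac{1}{n}D_{\mathrm{in}}J_{n-s}\right)^{-1} D_{\mathrm{in}}\mathbf{1}\right| \le C. \]
   Context: $m_\mu(z) := \int_{\mathbb{C}} \frac{d\mu(x)}{z-x}$ for $z \notin \operatorname{supp}(\mu)$; $M_\mu := \{ z \in \mathbb{C}\setminus \operatorname{supp}(\mu) : m_\mu(z) = 0\}$; and $N_\mu(\varepsilon) := \{ z \in \mathbb{C} : \operatorname{dist}(z, \operatorname{supp}(\mu) \cup M_\mu) < \varepsilon\}$. *)

theory Defs
  imports "HOL-Probability.Probability" "Jordan_Normal_Form.Gauss_Jordan_Elimination"
begin

definition msupp :: "complex measure \<Rightarrow> complex set" where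
  "msupp \<mu> = {x. \<forall>e>0. emeasure \<mu> (ball x e) > 0}"

definition stieltjes :: "complex measure \<Rightarrow> complex \<Rightarrow> complex" where
  "stieltjes \<mu> z = integral\<^sup>L \<mu> (\<lambda>x. 1 / (z - x))"

definition Mset :: "complex measure \<Rightarrow> complex set" where
  "Mset \<mu> = {z. z \<notin> msupp \<mu> \<and> stieltjes \<mu> z = 0}"

definition Nbhd :: "complex measure \<Rightarrow> real \<Rightarrow> complex set" where
  "Nbhd \<mu> \<epsilon> = {z. infdist z (msupp \<mu> \<union> Mset \<mu>) < \<epsilon>}"

text \<open>D_in = diag(x_1,...,x_{n-k}, xi_{s+1},...,xi_k), an (n-s)x(n-s) matrix.
  The random sequence is 0-based here: diagonal entry i < n-k is x i (= X_{i+1}).\<close>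
definition Din :: "(nat \<Rightarrow> complex) \<Rightarrow> (nat \<Rightarrow> complex) \<Rightarrow> nat \<Rightarrow> nat \<Rightarrow> nat \<Rightarrow> complex mat" where
  "Din x xi k s n = mat (n - s) (n - s)
     (\<lambda>(i, j). if i = j then (if i < n - k then x i else xi (i - (n - k) + s + 1)) else 0)"

definition onesJ :: "nat \<Rightarrow> complex mat" where
  "onesJ m = mat m m (\<lambda>_. 1)"

definition onesv :: "nat \<Rightarrow> complex vec" where
  "onesv m = vec m (\<lambda>_. 1)"

definition Rmat :: "complex mat \<Rightarrow> nat \<Rightarrow> nat \<Rightarrow> complex \<Rightarrow> complex mat" where
  "Rmat D m n z = z \<cdot>\<^sub>m 1\<^sub>m m - D + (1 / of_nat n) \<cdot>\<^sub>m (D * onesJ m)"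

definition Ffun :: "complex mat \<Rightarrow> nat \<Rightarrow> nat \<Rightarrow> complex \<Rightarrow> complex" where
  "Ffun D m n z = (1 / of_nat n) *
     (onesv m \<bullet> (the (mat_inverse (Rmat D m n z)) *\<^sub>v (D *\<^sub>v onesv m)))"

end

theory Submission
  imports Defs "Jordan_Normal_Form.Determinant"
begin



lemma Rmat_explicit:
  assumes D: "D = mat m m (\<lambda>(i,j). if i = j then d i else 0)"
  shows "Rmat D m n z = mat m m (\<lambda>(i,j). (if i = j then z - d i else 0) + d i / of_nat n)"
proof (rule eq_matI)
  fix i j assume ij: "i < dim_row (mat m m (\<lambda>(i,j). (if i = j then z - d i else 0) + d i / of_nat n))"
     "j < dim_col (mat m m (\<lambda>(i,j). (if i = j then z - d i else 0) + d i / of_nat n))"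
  hence i: "i < m" and j: "j < m" by auto
  have DJ: "(D * onesJ m) $$ (i,j) = d i"
  proof -
    have "(D * onesJ m) $$ (i,j) = (\<Sum>k = 0..<m. (if i = k then d i else 0))"
      using i j by (auto simp: D onesJ_def scalar_prod_def row_def col_def intro!: sum.cong)
    also have "\<dots> = d i" using i by (simp add: sum.delta)
    finally show ?thesis .
  qed
  show "Rmat D m n z $$ (i, j) = mat m m (\<lambda>(i,j). (if i = j then z - d i else 0) + d i / of_nat n) $$ (i, j)"
    using i j DJ unfolding Rmat_def by (simp add: D onesJ_def)
qed (auto simp: Rmat_def D onesJ_def)

lemma Rmat_mult:
  assumes D: "D = mat m m (\<lambda>(i,j). if i = j then d i else 0)"
    and y: "y \<in> carrier_vec m" and i: "i < m"
  shows "vec_index (Rmat D m n z *\<^sub>v y) i = (z - d i) * vec_index y i + d i / of_nat n * (\<Sum>k<m. vec_index y k)"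
proof -
  have "vec_index (Rmat D m n z *\<^sub>v y) i = (\<Sum>k<m. ((if i = k then z - d i else 0) + d i / of_nat n) * vec_index y k)"
    using i y by (simp add: Rmat_explicit[OF D] scalar_prod_def row_def lessThan_atLeast0)
  also have "\<dots> = (\<Sum>k<m. (if i = k then (z - d i) * vec_index y k else 0)) + (\<Sum>k<m. d i / of_nat n * vec_index y k)"
    by (subst sum.distrib[symmetric], rule sum.cong) (auto simp: distrib_right)
  also have "\<dots> = (z - d i) * vec_index y i + d i / of_nat n * (\<Sum>k<m. vec_index y k)"
    using i by (simp add: sum.delta sum_distrib_left)
  finally show ?thesis .
qed

lemma Rmat_carrier: "Rmat D m n z \<in> carrier_mat m m"
  if "D = mat m m (\<lambda>(i,j). if i = j then d i else 0)"
  using that by (simp add: Rmat_explicit)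

lemma solve_lin: fixes a b c v :: complex assumes "a \<noteq> 0" "a * v + b = c" shows "v = (c - b)/a"
  using assms by (simp add: field_simps)

lemma sum_frac_eq:
  fixes d y :: "nat \<Rightarrow> complex"
  assumes "\<And>i. i < m \<Longrightarrow> y i = d i * c / (z - d i)"
  shows "(\<Sum>i<m. y i) = c * (\<Sum>i<m. d i / (z - d i))"
  using assms by (simp add: sum_distrib_left mult.commute)

lemma LA:
  fixes d :: "nat \<Rightarrow> complex"
  assumes D: "D = mat m m (\<lambda>(i,j). if i = j then d i else 0)"
    and dz: "\<And>i. i < m \<Longrightarrow> d i \<noteq> z" and n: "n > 0"
    and w: "w = (\<Sum>i<m. d i / (z - d i)) / of_nat n" and nz: "1 + w \<noteq> 0"
  shows "invertible_mat (Rmat D m n z) \<and> Ffun D m n z = w / (1 + w)"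
proof -
  let ?R = "Rmat D m n z"
  have Rc: "?R \<in> carrier_mat m m" by (rule Rmat_carrier[OF D])
  have ker: "v = 0\<^sub>v m" if v: "v \<in> carrier_vec m" and Rv: "?R *\<^sub>v v = 0\<^sub>v m" for v
  proof -
    define \<sigma> where "\<sigma> = (\<Sum>k<m. vec_index v k)"
    have vi: "vec_index v i = d i * (- \<sigma> / of_nat n) / (z - d i)" if i: "i < m" for i
    proof -
      have "(z - d i) * vec_index v i + d i / of_nat n * \<sigma> = 0"
        using Rmat_mult[OF D v i, of n z] Rv i by (simp add: \<sigma>_def)
      moreover have "z - d i \<noteq> 0" using dz[OF i] by simp
      ultimately have "vec_index v i = (0 - d i / of_nat n * \<sigma>) / (z - d i)" using solve_lin by blast
      thus ?thesis by simp
    qed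
    have "(\<Sum>k<m. vec_index v k) = (- \<sigma> / of_nat n) * (\<Sum>i<m. d i / (z - d i))"
      by (rule sum_frac_eq) (rule vi)
    hence "\<sigma> = (- \<sigma> / of_nat n) * (\<Sum>i<m. d i / (z - d i))" unfolding \<sigma>_def[symmetric] .
    hence "\<sigma> * (1 + w) = 0" using n by (simp add: w field_simps)
    hence "\<sigma> = 0" using nz by simp
    thus ?thesis using vi v by (intro eq_vecI) auto
  qed
  have "det ?R \<noteq> 0"
    using ker det_0_iff_vec_prod_zero[OF Rc] by auto
  hence "?R \<in> Units (ring_mat TYPE(complex) m undefined)"
    by (rule det_non_zero_imp_unit[OF Rc])
  hence "mat_inverse ?R \<noteq> None" using mat_inverse(1)[OF Rc] by metis
  then obtain B where B: "mat_inverse ?R = Some B" by (cases "mat_inverse ?R") auto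
  from mat_inverse(2)[OF Rc B] have RB: "?R * B = 1\<^sub>m m" and BR: "B * ?R = 1\<^sub>m m"
    and Bc: "B \<in> carrier_mat m m" by auto
  have inv: "invertible_mat ?R"
    unfolding invertible_mat_def inverts_mat_def using Rc RB BR Bc by auto
  define y where "y = B *\<^sub>v (D *\<^sub>v onesv m)"
  have D1c: "D *\<^sub>v onesv m \<in> carrier_vec m" unfolding carrier_vec_def by (simp add: D)
  have yc: "y \<in> carrier_vec m" unfolding y_def using Bc D1c by simp
  have Ry: "?R *\<^sub>v y = D *\<^sub>v onesv m"
    unfolding y_def using assoc_mult_mat_vec[OF Rc Bc D1c] RB D1c by simp
  have D1i: "vec_index (D *\<^sub>v onesv m) i = d i" if "i < m" for i
  proof -
    have "vec_index (D *\<^sub>v onesv m) i = (\<Sum>k = 0..<m. (if i = k then d i else 0))"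
      using that by (auto simp: D onesv_def scalar_prod_def row_def intro!: sum.cong)
    also have "\<dots> = d i" using that by (simp add: sum.delta)
    finally show ?thesis .
  qed
  define \<sigma> where "\<sigma> = (\<Sum>k<m. vec_index y k)"
  have yi: "vec_index y i = d i * (1 - \<sigma> / of_nat n) / (z - d i)" if i: "i < m" for i
  proof -
    have "(z - d i) * vec_index y i + d i / of_nat n * \<sigma> = d i"
      using Rmat_mult[OF D yc i, of n z] Ry i D1i[OF i] by (simp add: \<sigma>_def)
    moreover have "z - d i \<noteq> 0" using dz[OF i] by simp
    ultimately have "vec_index y i = (d i - d i / of_nat n * \<sigma>) / (z - d i)" using solve_lin by blast
    thus ?thesis by (simp add: algebra_simps)
  qed
  have "(\<Sum>k<m. vec_index y k) = (1 - \<sigma> / of_nat n) * (\<Sum>i<m. d i / (z - d i))"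
    by (rule sum_frac_eq) (rule yi)
  hence "\<sigma> = (1 - \<sigma> / of_nat n) * (\<Sum>i<m. d i / (z - d i))" unfolding \<sigma>_def[symmetric] .
  hence "\<sigma> / of_nat n * (1 + w) = w" using n by (simp add: w field_simps)
  hence s: "\<sigma> / of_nat n = w / (1 + w)" using nz by (simp add: field_simps)
  have "onesv m \<bullet> y = \<sigma>"
    using yc by (simp add: onesv_def scalar_prod_def \<sigma>_def lessThan_atLeast0)
  hence "Ffun D m n z = \<sigma> / of_nat n"
    unfolding Ffun_def B using y_def by simp
  with s inv show ?thesis by simp
qed



lemma LLN:
  fixes P :: "'w measure" and X :: "nat \<Rightarrow> 'w \<Rightarrow> complex" and \<mu> :: "complex measure"
    and f :: "complex \<Rightarrow> real"
  assumes P: "prob_space P"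
    and Xm: "\<And>i. X i \<in> borel_measurable P"
    and ind: "prob_space.indep_vars P (\<lambda>_. borel) X UNIV"
    and dist: "\<And>i. distr P borel (X i) = \<mu>"
    and fm: "f \<in> borel_measurable borel"
    and fb: "\<And>x. \<bar>f x\<bar> \<le> B" and B: "B > 0" and \<delta>: "\<delta> > 0"
  shows "AE \<omega> in P. eventually (\<lambda>n. \<bar>(\<Sum>i<n. f (X i \<omega>)) / real n - integral\<^sup>L \<mu> f\<bar> < \<delta>) sequentially"
proof -
  interpret prob_space P by (rule P)
  have [measurable]: "X i \<in> borel_measurable P" for i by (rule Xm)
  note fm[measurable]
  have fb2: "-B \<le> f x \<and> f x \<le> B" for x using fb[of x] by linarith
  define E where "E = integral\<^sup>L \<mu> f"
  define A where "A n = {\<omega> \<in> space P. \<bar>(\<Sum>i\<in>{..<Suc n}. f (X i \<omega>)) / real (card {..<Suc n}) - E\<bar> \<ge> \<delta>}" for n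
  define q where "q = exp (-2 * \<delta>\<^sup>2 / (B - - B)\<^sup>2)"
  have EY: "expectation (\<lambda>\<omega>. f (X 0 \<omega>)) = E"
  proof -
    have "expectation (\<lambda>\<omega>. f (X 0 \<omega>)) = integral\<^sup>L (distr P borel (X 0)) f"
      by (rule integral_distr[symmetric]) auto
    thus ?thesis using dist by (simp add: E_def)
  qed
  have bnd: "prob (A n) \<le> 2 * q ^ Suc n" for n
  proof -
    interpret H: Hoeffding_ineq_iid P "{..<Suc n}" "\<lambda>i \<omega>. f (X i \<omega>)" "\<lambda>\<omega>. f (X 0 \<omega>)" "-B" B
      "expectation (\<lambda>\<omega>. f (X 0 \<omega>))"
    proof unfold_locales
      show "indep_vars (\<lambda>_. borel) (\<lambda>i \<omega>. f (X i \<omega>)) {..<Suc n}"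
        by (rule indep_vars_compose2[OF indep_vars_subset[OF ind]]) auto
      fix i
      have "distr P borel (\<lambda>\<omega>. f (X i \<omega>)) = distr (distr P borel (X i)) borel f"
        by (subst distr_distr) (auto simp: comp_def)
      also have "\<dots> = distr (distr P borel (X 0)) borel f" by (simp add: dist)
      also have "\<dots> = distr P borel (\<lambda>\<omega>. f (X 0 \<omega>))"
        by (subst distr_distr) (auto simp: comp_def)
      finally show "distr P borel (\<lambda>\<omega>. f (X i \<omega>)) = distr P borel (\<lambda>\<omega>. f (X 0 \<omega>))" .
    qed (use fb2 in simp_all)
    have "prob {x\<in>space P. \<bar>(\<Sum>i\<in>{..<Suc n}. f (X i x)) / real (card {..<Suc n}) - expectation (\<lambda>\<omega>. f (X 0 \<omega>))\<bar> \<ge> \<delta>}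
          \<le> 2 * exp (-2 * real (card {..<Suc n}) * \<delta>\<^sup>2 / (B - - B)\<^sup>2)"
      by (rule H.Hoeffding_ineq_abs_ge') (use \<delta> B in auto)
    moreover have "exp (-2 * real (card {..<Suc n}) * \<delta>\<^sup>2 / (B - - B)\<^sup>2) = q ^ Suc n"
    proof -
      have e: "-2 * real (card {..<Suc n}) * \<delta>\<^sup>2 / (B - - B)\<^sup>2 = real (Suc n) * (-2 * \<delta>\<^sup>2 / (B - - B)\<^sup>2)"
        using B by (simp add: field_simps)
      show ?thesis unfolding e q_def by (rule exp_of_nat_mult)
    qed
    ultimately show ?thesis unfolding A_def EY by simp
  qed
  have q: "q < 1" "q \<ge> 0" using \<delta> B by (auto simp: q_def)
  have summ: "summable (\<lambda>n. measure P (A n))"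
  proof (rule summable_comparison_test[where g = "\<lambda>n. 2 * q ^ Suc n"])
    show "\<exists>N. \<forall>n\<ge>N. norm (measure P (A n)) \<le> 2 * q ^ Suc n" using bnd by auto
    show "summable (\<lambda>n. 2 * q ^ Suc n)" using q by (intro summable_mult summable_Suc_iff[THEN iffD2] summable_geometric) auto
  qed
  have Am: "A n \<in> sets P" for n unfolding A_def by measurable
  have "AE \<omega> in P. eventually (\<lambda>n. \<omega> \<in> space P - A n) sequentially"
    by (rule borel_cantelli_AE1[OF Am _ summ]) (simp add: emeasure_eq_measure)
  thus ?thesis
  proof (rule AE_mp, intro AE_I2 impI)
    fix \<omega> assume \<omega>: "\<omega> \<in> space P" and ev: "eventually (\<lambda>n. \<omega> \<in> space P - A n) sequentially"
    then obtain N where N: "\<And>n. n \<ge> N \<Longrightarrow> \<omega> \<notin> A n" by (auto simp: eventually_sequentially)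
    show "eventually (\<lambda>n. \<bar>(\<Sum>i<n. f (X i \<omega>)) / real n - integral\<^sup>L \<mu> f\<bar> < \<delta>) sequentially"
      unfolding eventually_sequentially
    proof (intro exI[of _ "Suc N"] allI impI)
      fix n assume n: "n \<ge> Suc N"
      then obtain m where m: "n = Suc m" "m \<ge> N" by (cases n) auto
      from N[OF m(2)] \<omega> show "\<bar>(\<Sum>i<n. f (X i \<omega>)) / real n - integral\<^sup>L \<mu> f\<bar> < \<delta>"
        by (simp add: A_def m(1) E_def not_le)
    qed
  qed
qed



lemma infdist_lt: assumes "A \<noteq> {}" "infdist x A < e" shows "\<exists>a\<in>A. dist x a < e"
proof -
  have "Inf ((\<lambda>a. dist x a) ` A) < e" using assms by (simp add: infdist_def)
  then obtain y where "y \<in> (\<lambda>a. dist x a) ` A" "y < e"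
    using cInf_lessD[of "(\<lambda>a. dist x a) ` A" e] assms(1) by blast
  thus ?thesis by auto
qed

lemma int_bound:
  fixes f :: "'a \<Rightarrow> complex"
  assumes "prob_space M" "integrable M f" "AE x in M. norm (f x) \<le> B"
  shows "norm (integral\<^sup>L M f) \<le> B"
proof -
  have "norm (integral\<^sup>L M f) \<le> integral\<^sup>L M (\<lambda>x. norm (f x))" by (rule integral_norm_bound)
  also have "\<dots> \<le> integral\<^sup>L M (\<lambda>x. B)"
    using assms by (intro integral_mono_AE) (auto intro: finite_measure.integrable_const prob_space.finite_measure)
  also have "\<dots> = B" using assms(1) by (simp add: prob_space.prob_space)
  finally show ?thesis .
qed

locale SM =
  fixes \<mu> :: "complex measure"
  assumes ps: "prob_space \<mu>" and sb: "sets \<mu> = sets borel"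
    and cpt: "compact (msupp \<mu>)" and z0: "0 \<in> msupp \<mu>"
begin

abbreviation "S \<equiv> msupp \<mu>"

lemma space_eq: "space \<mu> = UNIV"
  using sets_eq_imp_space_eq[OF sb] by simp

lemma S_closed: "closed S" using cpt compact_imp_closed by blast

lemma S_sets: "S \<in> sets \<mu>" using sb borel_closed[OF S_closed] by simp

lemma meas_cong: "f \<in> borel_measurable borel \<Longrightarrow> f \<in> borel_measurable \<mu>"
  using measurable_cong_sets[OF sb refl] by blast

lemma supp_AE: "AE x in \<mu>. x \<in> S"
proof -
  obtain \<B> :: "complex set set" where B: "countable \<B>" "\<And>C. C \<in> \<B> \<Longrightarrow> open C"
    "\<And>S. open S \<Longrightarrow> \<exists>U. U \<subseteq> \<B> \<and> S = \<Union>U"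
    by (rule univ_second_countable) blast
  define N where "N = \<Union>((\<lambda>b. b) ` {b\<in>\<B>. emeasure \<mu> b = 0})"
  have N: "N \<in> null_sets \<mu>"
    unfolding N_def using B(1) B(2) sb
    by (intro null_sets_UN') (auto simp: null_sets_def)
  have "{x \<in> space \<mu>. x \<notin> S} \<subseteq> N"
  proof
    fix x assume "x \<in> {x \<in> space \<mu>. x \<notin> S}"
    then obtain e where e: "e > 0" "\<not> emeasure \<mu> (ball x e) > 0" by (auto simp: msupp_def)
    hence b0: "emeasure \<mu> (ball x e) = 0" by (simp add: not_gr_zero)
    obtain U where U: "U \<subseteq> \<B>" "ball x e = \<Union>U" using B(3)[of "ball x e"] by auto
    then obtain b where b: "b \<in> U" "x \<in> b" using e(1) by (metis UnionE centre_in_ball)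
    have "b \<subseteq> ball x e" using U b by auto
    moreover have "b \<in> sets \<mu>" using B(2) U b sb by auto
    ultimately have "emeasure \<mu> b \<le> emeasure \<mu> (ball x e)"
      using sb by (intro emeasure_mono) auto
    hence "emeasure \<mu> b = 0" using b0 by simp
    thus "x \<in> N" unfolding N_def using U b by auto
  qed
  thus ?thesis by (rule AE_I'[OF N])
qed

definition R :: real where "R = max 1 (Sup (norm ` S))"

lemma R1: "R \<ge> 1" by (simp add: R_def)

lemma RS: "x \<in> S \<Longrightarrow> norm x \<le> R"
proof -
  assume x: "x \<in> S"
  have "bdd_above (norm ` S)" using compact_imp_bounded[OF cpt]
    by (auto simp: bounded_iff bdd_above_def)
  hence "norm x \<le> Sup (norm ` S)" using x by (intro cSup_upper) auto
  thus ?thesis by (simp add: R_def)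
qed

definition far :: "real \<Rightarrow> complex \<Rightarrow> bool" where "far e z \<longleftrightarrow> (\<forall>x\<in>S. e \<le> dist z x)"

definition g :: "complex \<Rightarrow> complex \<Rightarrow> complex" where "g z x = (if x \<in> S then z / (z - x) else 0)"

definition G :: "complex \<Rightarrow> complex" where "G z = integral\<^sup>L \<mu> (g z)"

lemma g_meas: "g z \<in> borel_measurable \<mu>"
proof -
  have [measurable]: "S \<in> sets borel" using borel_closed[OF S_closed] .
  have "g z \<in> borel_measurable borel" unfolding g_def by measurable
  thus ?thesis by (rule meas_cong)
qed

lemma z_split: fixes z x :: complex assumes "z \<noteq> x" shows "z / (z - x) = 1 + x / (z - x)"
proof -
  have "z - x \<noteq> 0" using assms by simp
  thus ?thesis by (simp add: field_simps)
qed

lemma g1: assumes "far e z" "e > 0" "x \<in> S" shows "norm (z / (z - x)) \<le> 1 + R / e"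
proof -
  have d: "e \<le> norm (z - x)" using assms by (auto simp: far_def dist_norm)
  hence zx: "z \<noteq> x" using assms(2) by auto
  have "norm x / norm (z - x) \<le> R / e"
    by (rule frac_le) (use d RS[OF assms(3)] assms(2) R1 in auto)
  hence "norm (x / (z - x)) \<le> R / e" by (simp add: norm_divide)
  thus ?thesis using z_split[OF zx] norm_triangle_ineq[of 1 "x / (z - x)"] by simp
qed

lemma g_bound: assumes "far e z" "e > 0" shows "norm (g z x) \<le> 1 + R / e"
  using g1[OF assms] R1 assms(2) by (auto simp: g_def)

lemma g_int: assumes "far e z" "e > 0" shows "integrable \<mu> (g z)"
  by (rule finite_measure.integrable_const_bound[where B = "1 + R / e"])
     (use ps g_meas g_bound[OF assms] in \<open>auto simp: prob_space_def\<close>)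

lemma g2: assumes "far e z" "far e w" "e > 0" "x \<in> S"
  shows "norm (z / (z - x) - w / (w - x)) \<le> R / e\<^sup>2 * norm (z - w)"
proof -
  have dz: "e \<le> norm (z - x)" and dw: "e \<le> norm (w - x)" using assms by (auto simp: far_def dist_norm)
  hence nz: "z - x \<noteq> 0" "w - x \<noteq> 0" using assms(3) by auto
  have "z / (z - x) - w / (w - x) = x * (w - z) / ((z - x) * (w - x))"
    using nz by (simp add: field_simps)
  hence "norm (z / (z - x) - w / (w - x)) = norm x * norm (z - w) / (norm (z - x) * norm (w - x))"
    by (simp add: norm_mult norm_divide norm_minus_commute)
  also have "\<dots> \<le> R * norm (z - w) / (e * e)"
    using RS[OF assms(4)] dz dw assms(3) R1
    by (intro frac_le mult_mono) auto
  finally show ?thesis by (simp add: power2_eq_square)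
qed

lemma g3: assumes "3 * R \<le> norm z" "x \<in> S" shows "1/2 \<le> Re (z / (z - x))"
proof -
  have xR: "norm x \<le> R" by (rule RS[OF assms(2)])
  have d: "2 * R \<le> norm (z - x)" using xR assms norm_triangle_ineq2[of z x] by linarith
  hence zx: "z \<noteq> x" using R1 by auto
  have "norm x / norm (z - x) \<le> R / (2 * R)"
    by (rule frac_le) (use d xR R1 in auto)
  hence "norm (x / (z - x)) \<le> R / (2 * R)" by (simp add: norm_divide)
  also have "\<dots> = 1/2" using R1 by simp
  finally have "- Re (x / (z - x)) \<le> 1/2" using abs_Re_le_cmod[of "x / (z - x)"] by linarith
  thus ?thesis using z_split[OF zx] by simp
qed


lemma g_meas_borel: "g z \<in> borel_measurable borel"
proof -
  have [measurable]: "S \<in> sets borel" using borel_closed[OF S_closed] .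
  show ?thesis unfolding g_def by measurable
qed

lemma int1: "integral\<^sup>L \<mu> (\<lambda>x. c) = (c::complex)"
  using prob_space.prob_space[OF ps] by simp

lemma int1c: "integrable \<mu> (\<lambda>x. c::complex)"
  using ps by (auto intro: finite_measure.integrable_const prob_space.finite_measure)

lemma G1: assumes "far e z" "e > 0" shows "G z = z * stieltjes \<mu> z"
proof -
  have "G z = integral\<^sup>L \<mu> (\<lambda>x. z * (1 / (z - x)))"
    unfolding G_def
  proof (rule integral_cong_AE)
    show "g z \<in> borel_measurable \<mu>" by (rule g_meas)
    show "(\<lambda>x. z * (1 / (z - x))) \<in> borel_measurable \<mu>" by (rule meas_cong) measurable
    show "AE x in \<mu>. g z x = z * (1 / (z - x))"
      using supp_AE by (rule AE_mp) (auto simp: g_def)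
  qed
  thus ?thesis unfolding stieltjes_def by (simp only: integral_mult_right_zero)
qed

lemma G2: assumes "far e z" "far e w" "e > 0"
  shows "norm (G z - G w) \<le> R / e\<^sup>2 * norm (z - w)"
proof -
  have "G z - G w = integral\<^sup>L \<mu> (\<lambda>x. g z x - g w x)"
    unfolding G_def by (rule Bochner_Integration.integral_diff[symmetric]; intro g_int[OF assms(1,3)] g_int[OF assms(2,3)])
  also have "norm \<dots> \<le> R / e\<^sup>2 * norm (z - w)"
  proof (rule int_bound[OF ps])
    show "integrable \<mu> (\<lambda>x. g z x - g w x)" using g_int assms by auto
    show "AE x in \<mu>. norm (g z x - g w x) \<le> R / e\<^sup>2 * norm (z - w)"
      using g2[OF assms] R1 assms(3) by (intro AE_I2) (auto simp: g_def)
  qed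
  finally show ?thesis .
qed

lemma farI: assumes "\<And>x. x \<in> S \<Longrightarrow> e \<le> dist z x" shows "far e z"
  using assms by (auto simp: far_def)

lemma G3: assumes "2 * R < norm z" shows "G z \<noteq> 0"
proof -
  have far: "far R z"
  proof (rule farI)
    fix x assume "x \<in> S"
    hence "norm x \<le> R" by (rule RS)
    thus "R \<le> dist z x" using assms norm_triangle_ineq2[of z x] by (simp add: dist_norm)
  qed
  have R0: "R > 0" using R1 by simp
  have "integral\<^sup>L \<mu> (\<lambda>x. g z x - 1) = G z - integral\<^sup>L \<mu> (\<lambda>x. 1)"
    unfolding G_def by (rule Bochner_Integration.integral_diff; intro g_int[OF far R0] int1c)
  hence "G z - 1 = integral\<^sup>L \<mu> (\<lambda>x. g z x - 1)" by (simp only: int1)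
  also have "norm \<dots> \<le> R / (norm z - R)"
  proof (rule int_bound[OF ps])
    show "integrable \<mu> (\<lambda>x. g z x - 1)"
      by (rule Bochner_Integration.integrable_diff; intro g_int[OF far R0] int1c)
    show "AE x in \<mu>. norm (g z x - 1) \<le> R / (norm z - R)"
      using supp_AE
    proof (rule AE_mp, intro AE_I2 impI)
      fix x assume x: "x \<in> S"
      have d: "norm z - R \<le> norm (z - x)" using RS[OF x] norm_triangle_ineq2[of z x] by linarith
      hence zx: "z \<noteq> x" using assms R1 by auto
      have "norm x / norm (z - x) \<le> R / (norm z - R)"
        by (rule frac_le) (use d RS[OF x] assms R1 in auto)
      thus "norm (g z x - 1) \<le> R / (norm z - R)"
        using z_split[OF zx] x by (simp add: g_def norm_divide)
    qed
  qed
  also have "\<dots> < 1" using assms R1 by (simp add: field_simps)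
  finally have "norm (G z - 1) < 1" .
  thus ?thesis by auto
qed

lemma Mb: assumes "z \<in> Mset \<mu>" shows "norm z \<le> 2 * R"
proof (rule ccontr)
  assume "\<not> ?thesis"
  hence n: "2 * R < norm z" by simp
  have far: "far R z"
  proof (rule farI)
    fix x assume "x \<in> S"
    hence "norm x \<le> R" by (rule RS)
    thus "R \<le> dist z x" using n norm_triangle_ineq2[of z x] by (simp add: dist_norm)
  qed
  have "G z = 0" using G1[OF far] R1 assms by (simp add: Mset_def)
  with G3[OF n] show False by simp
qed

abbreviation "AA \<equiv> S \<union> Mset \<mu>"

lemma N1: assumes "z \<notin> Nbhd \<mu> e" "a \<in> AA" shows "e \<le> dist z a"
proof -
  have "e \<le> infdist z AA" using assms(1) by (simp add: Nbhd_def)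
  also have "\<dots> \<le> dist z a" by (rule infdist_le[OF assms(2)])
  finally show ?thesis .
qed

lemma N1far: "z \<notin> Nbhd \<mu> e \<Longrightarrow> far e z"
  using N1 by (auto simp: far_def)

lemma N2: assumes "z \<notin> Nbhd \<mu> (2 * e)" "y \<in> Nbhd \<mu> e" shows "e \<le> dist z y"
proof -
  have "2 * e \<le> infdist z AA" using assms(1) by (simp add: Nbhd_def)
  also have "\<dots> \<le> infdist y AA + dist z y" by (rule infdist_triangle)
  finally show ?thesis using assms(2) by (simp add: Nbhd_def)
qed

lemma N3: assumes "y \<in> Nbhd \<mu> e" shows "norm y \<le> 2 * R + e"
proof -
  have "AA \<noteq> {}" using z0 by auto
  then obtain a where a: "a \<in> AA" "dist y a < e"
    using infdist_lt[of AA y e] assms by (auto simp: Nbhd_def)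
  have "norm a \<le> 2 * R" using a(1) RS[of a] Mb[of a] R1 by auto
  thus ?thesis using a(2) norm_triangle_ineq2[of y a] by (simp add: dist_norm)
qed

lemma N4: assumes "z \<notin> Nbhd \<mu> e" "e > 0" shows "G z \<noteq> 0"
proof -
  have "z \<noteq> 0" using N1[OF assms(1), of 0] z0 assms(2) by auto
  moreover have "z \<notin> S" using N1[OF assms(1), of z] assms(2) by auto
  moreover have "z \<notin> Mset \<mu>" using N1[OF assms(1), of z] assms(2) by auto
  ultimately have "stieltjes \<mu> z \<noteq> 0" by (auto simp: Mset_def)
  thus ?thesis using G1[OF N1far[OF assms(1)] assms(2)] \<open>z \<noteq> 0\<close> by simp
qed

lemma N5: "open (Nbhd \<mu> e)"
  unfolding Nbhd_def by (intro open_Collect_less continuous_intros)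

end


lemma sum_split_lt: "a \<le> b \<Longrightarrow> sum f {..<b} = sum f {..<a} + sum f {a..<(b::nat)}"
  by (simp add: lessThan_atLeast0 sum.atLeastLessThan_concat)

lemma sum_norm_bound_ivl:
  fixes f :: "nat \<Rightarrow> complex"
  assumes "\<And>i. a \<le> i \<Longrightarrow> i < b \<Longrightarrow> norm (f i) \<le> B" "b - a \<le> K" "0 \<le> B"
  shows "norm (sum f {a..<b}) \<le> K * B"
proof -
  have "norm (sum f {a..<b}) \<le> (\<Sum>i\<in>{a..<b}. B)"
    using assms(1) by (intro sum_norm_le) auto
  also have "\<dots> = real (b - a) * B" by simp
  also have "\<dots> \<le> K * B" using assms(2,3) by (intro mult_right_mono) auto
  finally show ?thesis .
qed

context SM begin

lemma zdiv_bound: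
  fixes z y :: complex
  assumes "e \<le> dist z y" "e > 0" "norm y \<le> M"
  shows "norm (z / (z - y)) \<le> 1 + M / e"
proof -
  have d: "e \<le> norm (z - y)" using assms by (simp add: dist_norm)
  hence zy: "z \<noteq> y" using assms(2) by auto
  have M0: "0 \<le> M" using assms(3) norm_ge_zero order_trans by blast
  have "norm y / norm (z - y) \<le> M / e"
    by (rule frac_le) (use d assms M0 in auto)
  hence "norm (y / (z - y)) \<le> M / e" by (simp add: norm_divide)
  thus ?thesis using z_split[OF zy] norm_triangle_ineq[of 1 "y / (z - y)"] by simp
qed


lemma det_core:
  fixes x xi :: "nat \<Rightarrow> complex" and c :: real and k K s n :: nat
  assumes eps: "\<epsilon> > 0" and c: "c > 0"
    and kK: "k \<le> K" and sk: "s \<le> k" and kn: "k \<le> n" and n0: "0 < n"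
    and Xs: "\<And>i. x i \<in> S"
    and xiN: "\<And>j. j \<in> {s+1..k} \<Longrightarrow> xi j \<in> Nbhd \<mu> \<epsilon>"
    and Tlow: "\<And>z. z \<notin> Nbhd \<mu> (2 * \<epsilon>) \<Longrightarrow> 3 * c / 4 \<le> norm ((\<Sum>i<n. z / (z - x i)) / of_nat n)"
    and nbig: "(K + 2 * K * (2 + 2 * R / \<epsilon>)) / n \<le> c / 4"
  shows "(\<forall>z. z \<notin> Nbhd \<mu> (2 * \<epsilon>) \<longrightarrow> invertible_mat (Rmat (Din x xi k s n) (n - s) n z))
       \<and> (Ffun (Din x xi k s n) (n - s) n) analytic_on (- closure (Nbhd \<mu> (2 * \<epsilon>)))
       \<and> (\<forall>z. z \<notin> Nbhd \<mu> (2 * \<epsilon>) \<longrightarrow> cmod (Ffun (Din x xi k s n) (n - s) n z) \<le> 1 + 2 / c)"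
proof -
  define d where "d i = (if i < n - k then x i else xi (i - (n - k) + s + 1))" for i
  define B1 where "B1 = 2 + 2 * R / \<epsilon>"
  have B1: "1 + R / \<epsilon> \<le> B1" "1 + (2 * R + \<epsilon>) / \<epsilon> \<le> B1" "0 \<le> B1"
    using eps R1 by (auto simp: B1_def field_simps)
  have Dd: "Din x xi k s n = mat (n - s) (n - s) (\<lambda>(i,j). if i = j then d i else 0)"
    unfolding Din_def d_def by (rule refl)
  define w where "w z = (\<Sum>i<n - s. d i / (z - d i)) / of_nat n" for z
  have hd: "d i \<noteq> z \<and> norm (z / (z - d i)) \<le> B1"
    if z: "z \<notin> Nbhd \<mu> (2 * \<epsilon>)" and i: "i < n - s" for z i
  proof (cases "i < n - k")
    case True
    hence di: "d i = x i" by (simp add: d_def)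
    have far: "far \<epsilon> z" using N1far[OF z] eps unfolding far_def by force
    have "2 * \<epsilon> \<le> dist z (x i)" using N1[OF z, of "x i"] Xs by auto
    hence "d i \<noteq> z" using di eps by auto
    moreover have "norm (z / (z - d i)) \<le> B1" using g1[OF far eps Xs[of i]] B1 di by simp
    ultimately show ?thesis ..
  next
    case False
    hence di: "d i = xi (i - (n - k) + s + 1)" by (simp add: d_def)
    have "i - (n - k) + s + 1 \<in> {s+1..k}" using False i sk kn by auto
    hence xin: "d i \<in> Nbhd \<mu> \<epsilon>" using xiN di by simp
    have dz: "\<epsilon> \<le> dist z (d i)" by (rule N2[OF z xin])
    hence "d i \<noteq> z" using eps by auto
    moreover have "norm (z / (z - d i)) \<le> 1 + (2 * R + \<epsilon>) / \<epsilon>"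
      by (rule zdiv_bound[OF dz eps N3[OF xin]])
    ultimately show ?thesis using B1 by auto
  qed
  have low: "c / 2 \<le> norm (1 + w z)" if z: "z \<notin> Nbhd \<mu> (2 * \<epsilon>)" for z
  proof -
    define T where "T = (\<Sum>i<n. z / (z - x i)) / of_nat n"
    have sn: "s \<le> n" using sk kn by simp
    have e1: "d i / (z - d i) = z / (z - d i) - 1" if "i < n - s" for i
    proof -
      have "z - d i \<noteq> 0" using hd[OF z that] by auto
      thus ?thesis by (simp add: field_simps)
    qed
    have "(\<Sum>i<n - s. d i / (z - d i)) = (\<Sum>i<n - s. z / (z - d i)) - of_nat (n - s)"
      using e1 by (simp add: sum_subtractf)
    hence w1: "1 + w z = (of_nat s + (\<Sum>i<n - s. z / (z - d i))) / of_nat n"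
      using n0 sn by (simp add: w_def field_simps of_nat_diff)
    have split1: "(\<Sum>i<n - s. z / (z - d i)) = (\<Sum>i<n - k. z / (z - x i)) + (\<Sum>i\<in>{n-k..<n-s}. z / (z - d i))"
      using sk by (subst sum_split_lt[of "n - k"]) (auto simp: d_def)
    have split2: "(\<Sum>i<n. z / (z - x i)) = (\<Sum>i<n - k. z / (z - x i)) + (\<Sum>i\<in>{n-k..<n}. z / (z - x i))"
      by (rule sum_split_lt) simp
    have b1: "norm (\<Sum>i\<in>{n-k..<n-s}. z / (z - d i)) \<le> K * B1"
      by (rule sum_norm_bound_ivl) (use hd[OF z] kK sk kn B1 in auto)
    have b2: "norm (\<Sum>i\<in>{n-k..<n}. z / (z - x i)) \<le> K * B1"
    proof (rule sum_norm_bound_ivl)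
      fix i
      have far: "far \<epsilon> z" using N1far[OF z] eps unfolding far_def by force
      show "norm (z / (z - x i)) \<le> B1" using g1[OF far eps Xs[of i]] B1 by simp
    qed (use kK B1 in auto)
    have "of_nat n * (1 + w z) - of_nat n * T
          = of_nat s + (\<Sum>i\<in>{n-k..<n-s}. z / (z - d i)) - (\<Sum>i\<in>{n-k..<n}. z / (z - x i))"
      using n0 by (simp add: w1 T_def split1 split2)
    hence "norm (of_nat n * (1 + w z) - of_nat n * T) \<le> real s + K * B1 + K * B1"
      using b1 b2 norm_triangle_ineq4 norm_triangle_ineq
      by (smt (verit) norm_of_nat)
    also have "\<dots> \<le> K + 2 * K * B1" using sk kK by simp
    finally have A: "norm (of_nat n * (1 + w z) - of_nat n * T) \<le> K + 2 * K * B1" .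
    have "norm (of_nat n * (1 + w z) - of_nat n * T) = real n * norm (1 + w z - T)"
      by (simp only: right_diff_distrib[symmetric] norm_mult norm_of_nat)
    with A have "norm (1 + w z - T) * n \<le> K + 2 * K * B1" by (simp add: mult.commute)
    hence "norm (1 + w z - T) \<le> (K + 2 * K * B1) / n" using n0 by (simp add: field_simps)
    hence "norm (1 + w z - T) \<le> c / 4" using nbig unfolding B1_def by linarith
    moreover have "3 * c / 4 \<le> norm T" using Tlow[OF z] by (simp add: T_def)
    ultimately show ?thesis using norm_triangle_ineq2[of T "1 + w z"] norm_minus_commute[of "1 + w z" T]
      by linarith
  qed
  have main: "invertible_mat (Rmat (Din x xi k s n) (n - s) n z) \<and> Ffun (Din x xi k s n) (n - s) n z = w z / (1 + w z)"
    if z: "z \<notin> Nbhd \<mu> (2 * \<epsilon>)" for z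
  proof (rule LA[OF Dd])
    show "\<And>i. i < n - s \<Longrightarrow> d i \<noteq> z" using hd[OF z] by blast
    show "0 < n" by (rule n0)
    show "w z = (\<Sum>i<n - s. d i / (z - d i)) / of_nat n" by (simp add: w_def)
    show "1 + w z \<noteq> 0" using low[OF z] c by auto
  qed
  have bound: "cmod (Ffun (Din x xi k s n) (n - s) n z) \<le> 1 + 2 / c"
    if z: "z \<notin> Nbhd \<mu> (2 * \<epsilon>)" for z
  proof -
    have l: "c / 2 \<le> norm (1 + w z)" by (rule low[OF z])
    have p: "norm (1 + w z) > 0" using l c by linarith
    have "norm (w z) \<le> norm (1 + w z) + 1"
      using norm_triangle_ineq4[of "1 + w z" 1] by simp
    hence "norm (w z / (1 + w z)) \<le> (norm (1 + w z) + 1) / norm (1 + w z)"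
      using p by (simp add: norm_divide divide_right_mono)
    also have "\<dots> = 1 + 1 / norm (1 + w z)" using p by (simp add: field_simps)
    also have "\<dots> \<le> 1 + 2 / c"
      using l c p by (simp add: field_simps)
    finally show ?thesis using main[OF z] by simp
  qed
  have an: "(Ffun (Din x xi k s n) (n - s) n) analytic_on (- closure (Nbhd \<mu> (2 * \<epsilon>)))"
  proof -
    let ?U = "- closure (Nbhd \<mu> (2 * \<epsilon>))"
    have sub: "z \<notin> Nbhd \<mu> (2 * \<epsilon>)" if "z \<in> ?U" for z
      using that closure_subset by auto
    have hdU: "z \<noteq> d i" if "i < n - s" "z \<notin> closure (Nbhd \<mu> (2 * \<epsilon>))" for i z
    proof -
      have "z \<in> ?U" using that(2) by simp
      thus ?thesis using hd[OF sub that(1)] by auto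
    qed
    have hdU2: "z - d i \<noteq> 0" if "i \<in> {..<n - s}" "z \<in> ?U" for i z
      using hdU[of i z] that by auto
    have lowU: "1 + (\<Sum>i<n - s. d i / (z - d i)) / of_nat n \<noteq> 0" if "z \<in> ?U" for z
      using low[OF sub[OF that]] c unfolding w_def by fastforce
    have "(\<lambda>z. w z / (1 + w z)) holomorphic_on ?U"
      unfolding w_def
      by (intro holomorphic_intros) (use n0 hdU2 lowU in auto)
    hence "(Ffun (Din x xi k s n) (n - s) n) holomorphic_on ?U"
      by (rule holomorphic_transform) (use main sub in auto)
    thus ?thesis by (simp add: analytic_on_open open_Compl)
  qed
  show ?thesis using main bound an by blast
qed


lemma Tlow_lemma:
  fixes x :: "nat \<Rightarrow> complex" and c :: real and Z :: "complex set"
  assumes eps: "\<epsilon> > 0" and c: "c > 0" "c \<le> 1/2" and n0: "0 < n"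
    and Zsub: "\<And>z'. z' \<in> Z \<Longrightarrow> z' \<notin> Nbhd \<mu> (2 * \<epsilon>)"
    and cover: "\<And>z. z \<notin> Nbhd \<mu> (2 * \<epsilon>) \<Longrightarrow> norm z < 3 * R \<Longrightarrow> \<exists>z'\<in>Z. dist z' z < c / (8 * (R / \<epsilon>\<^sup>2))"
    and Gc: "\<And>z'. z' \<in> Z \<Longrightarrow> c \<le> norm (G z')"
    and Xs: "\<And>i. x i \<in> S"
    and close: "\<And>z'. z' \<in> Z \<Longrightarrow> norm ((\<Sum>i<n. z' / (z' - x i)) / of_nat n - G z') < c / 8"
    and z: "z \<notin> Nbhd \<mu> (2 * \<epsilon>)"
  shows "3 * c / 4 \<le> norm ((\<Sum>i<n. z / (z - x i)) / of_nat n)"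
proof (cases "3 * R \<le> norm z")
  case True
  have "(\<Sum>i<n. (1/2::real)) \<le> (\<Sum>i<n. Re (z / (z - x i)))"
    using g3[OF True Xs] by (intro sum_mono) auto
  hence "real n / 2 \<le> Re (\<Sum>i<n. z / (z - x i))" by (simp add: Re_sum)
  hence "1/2 \<le> Re ((\<Sum>i<n. z / (z - x i)) / of_nat n)" using n0 by (simp add: field_simps)
  also have "\<dots> \<le> norm ((\<Sum>i<n. z / (z - x i)) / of_nat n)" by (rule complex_Re_le_cmod)
  finally show ?thesis using c by linarith
next
  case False
  define L where "L = R / \<epsilon>\<^sup>2"
  have L: "L > 0" using R1 eps by (simp add: L_def)
  obtain z' where z': "z' \<in> Z" "dist z' z < c / (8 * L)" using cover[OF z] False L_def by force
  have farz: "far \<epsilon> z" using N1far[OF z] eps unfolding far_def by force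
  have farz': "far \<epsilon> z'" using N1far[OF Zsub[OF z'(1)]] eps unfolding far_def by force
  have "norm ((\<Sum>i<n. z / (z - x i)) - (\<Sum>i<n. z' / (z' - x i))) \<le> (\<Sum>i<n. L * norm (z - z'))"
    unfolding sum_subtractf[symmetric] using g2[OF farz farz' eps Xs] by (intro sum_norm_le) (simp add: L_def)
  also have "\<dots> = real n * (L * norm (z - z'))" by simp
  finally have "norm ((\<Sum>i<n. z / (z - x i)) / of_nat n - (\<Sum>i<n. z' / (z' - x i)) / of_nat n) \<le> L * norm (z - z')"
    using n0 by (simp add: diff_divide_distrib[symmetric] norm_divide field_simps)
  also have "\<dots> \<le> L * (c / (8 * L))" using z'(2) L by (intro mult_left_mono) (auto simp: dist_norm norm_minus_commute)
  also have "\<dots> = c / 8" using L by simp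
  finally have d1: "norm ((\<Sum>i<n. z / (z - x i)) / of_nat n - (\<Sum>i<n. z' / (z' - x i)) / of_nat n) \<le> c / 8" .
  have d2: "norm ((\<Sum>i<n. z' / (z' - x i)) / of_nat n - G z') < c / 8" by (rule close[OF z'(1)])
  have d3: "c \<le> norm (G z')" by (rule Gc[OF z'(1)])
  define A where "A = (\<Sum>i<n. z / (z - x i)) / of_nat n"
  define Bv where "Bv = (\<Sum>i<n. z' / (z' - x i)) / of_nat n"
  have t1: "norm (G z') \<le> norm (G z' - Bv) + norm ((Bv - A) + A)"
    using norm_triangle_ineq[of "G z' - Bv" "(Bv - A) + A"] by simp
  have t2: "norm ((Bv - A) + A) \<le> norm (Bv - A) + norm A" by (rule norm_triangle_ineq)
  have t3: "norm (G z' - Bv) = norm (Bv - G z')" by (rule norm_minus_commute)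
  have t4: "norm (Bv - A) = norm (A - Bv)" by (rule norm_minus_commute)
  show ?thesis using d1 d2 d3 t1 t2 t3 t4 unfolding A_def[symmetric] Bv_def[symmetric] by linarith
qed

end


theorem mainTheorem12:
  fixes \<mu> :: "complex measure" and P :: "'w measure"
    and X :: "nat \<Rightarrow> 'w \<Rightarrow> complex"
    and \<xi> :: "nat \<Rightarrow> nat \<Rightarrow> complex" and k :: "nat \<Rightarrow> nat" and K :: nat
    and \<epsilon> :: real and s :: nat
  assumes "prob_space \<mu>" and "sets \<mu> = sets borel"
    and "compact (msupp \<mu>)" and "0 \<in> msupp \<mu>"
    and "prob_space P"
    and "\<And>i. X i \<in> borel_measurable P"
    and "prob_space.indep_vars P (\<lambda>_. borel) X UNIV"
    and "\<And>i. distr P borel (X i) = \<mu>"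
    and "\<And>n. k n \<le> K"
    and "\<epsilon> > 0"
    and "eventually (\<lambda>n. s \<le> k n
            \<and> (\<forall>j\<in>{1..s}. \<xi> n j \<notin> Nbhd \<mu> (3 * \<epsilon>))
            \<and> (\<forall>j\<in>{s+1..k n}. \<xi> n j \<in> Nbhd \<mu> \<epsilon>)) sequentially"
  shows "\<exists>C>0. AE \<omega> in P. eventually (\<lambda>n.
            (\<forall>z. z \<notin> Nbhd \<mu> (2 * \<epsilon>) \<longrightarrow>
                 invertible_mat (Rmat (Din (\<lambda>i. X i \<omega>) (\<xi> n) (k n) s n) (n - s) n z))
          \<and> (Ffun (Din (\<lambda>i. X i \<omega>) (\<xi> n) (k n) s n) (n - s) n)
               analytic_on (- closure (Nbhd \<mu> (2 * \<epsilon>)))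
          \<and> (\<forall>z. z \<notin> Nbhd \<mu> (2 * \<epsilon>) \<longrightarrow>
                 cmod (Ffun (Din (\<lambda>i. X i \<omega>) (\<xi> n) (k n) s n) (n - s) n z) \<le> C))
          sequentially"
proof -
  interpret SM \<mu> unfolding SM_def using assms(1-4) by blast
  interpret P: prob_space P by (rule assms(5))
  have Xm[measurable]: "X i \<in> borel_measurable P" for i by (rule assms(6))
  have eps: "\<epsilon> > 0" by (rule assms(10))
  have eps2: "2 * \<epsilon> > 0" using eps by simp
  have farK: "far \<epsilon> z" if "z \<notin> Nbhd \<mu> (2 * \<epsilon>)" for z
    using N1far[OF that] eps unfolding far_def by force
  define K0 where "K0 = - Nbhd \<mu> (2 * \<epsilon>) \<inter> cball 0 (3 * R)"
  have K0c: "compact K0" unfolding K0_def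
    by (intro closed_Int_compact closed_Compl N5 compact_cball)
  have K0N: "z \<notin> Nbhd \<mu> (2 * \<epsilon>)" if "z \<in> K0" for z using that by (simp add: K0_def)
  define L where "L = R / \<epsilon>\<^sup>2"
  have L: "L > 0" using R1 eps by (simp add: L_def)
  have lipG: "\<forall>z\<in>K0. \<forall>w\<in>K0. dist (G z) (G w) \<le> L * dist z w"
    using G2[OF farK farK eps] K0N by (auto simp: L_def dist_norm)
  obtain c where c: "c > 0" "c \<le> 1/2" "\<forall>z\<in>K0. c \<le> norm (G z)"
  proof (cases "K0 = {}")
    case True thus ?thesis using that[of "1/2"] by auto
  next
    case False
    have "continuous_on K0 G"
      by (rule lipschitz_on_continuous_on[of L]) (use lipG L in \<open>auto simp: lipschitz_on_def\<close>)
    hence "continuous_on K0 (\<lambda>z. norm (G z))" by (intro continuous_on_norm)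
    then obtain z0 where z0: "z0 \<in> K0" "\<forall>y\<in>K0. norm (G z0) \<le> norm (G y)"
      using continuous_attains_inf[OF K0c False] by blast
    have "G z0 \<noteq> 0" using N4[OF K0N[OF z0(1)] eps2] .
    hence p: "min (1/2) (norm (G z0)) > 0" by simp
    have m: "\<forall>z\<in>K0. min (1/2) (norm (G z0)) \<le> norm (G z)"
      using z0(2) by (auto intro: min.coboundedI2)
    show ?thesis by (rule that[of "min (1/2) (norm (G z0))"]) (use p m in auto)
  qed
  define \<delta> where "\<delta> = c / (8 * L)"
  have \<delta>: "\<delta> > 0" using c L by (simp add: \<delta>_def)
  have tb: "\<forall>e>0. \<exists>k. finite k \<and> k \<subseteq> K0 \<and> K0 \<subseteq> (\<Union>x\<in>k. ball x e)"
    by (rule seq_compact_imp_totally_bounded[OF compact_imp_seq_compact[OF K0c]])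
  obtain Z where Z0: "finite Z \<and> Z \<subseteq> K0 \<and> K0 \<subseteq> (\<Union>x\<in>Z. ball x \<delta>)"
    using tb[rule_format, OF \<delta>] by (elim exE) (rule that)
  note Z = Z0[THEN conjunct1] Z0[THEN conjunct2, THEN conjunct1] Z0[THEN conjunct2, THEN conjunct2]
  define B0 where "B0 = 1 + R / \<epsilon>"
  have B0: "B0 > 0" using R1 eps by (simp add: B0_def add_pos_nonneg)
  have c16: "c / 16 > 0" using c by simp
  have ae_close: "AE \<omega> in P. \<forall>z'\<in>Z. eventually (\<lambda>n.
      \<bar>(\<Sum>i<n. Re (g z' (X i \<omega>))) / real n - Re (G z')\<bar> < c / 16 \<and>
      \<bar>(\<Sum>i<n. Im (g z' (X i \<omega>))) / real n - Im (G z')\<bar> < c / 16) sequentially"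
  proof (rule AE_finite_allI[OF Z(1)])
    fix z' assume z': "z' \<in> Z"
    have far': "far \<epsilon> z'" using z' Z(2) K0N farK by blast
    have gi: "integrable \<mu> (g z')" by (rule g_int[OF far' eps])
    have [measurable]: "g z' \<in> borel_measurable borel" by (rule g_meas_borel)
    have bR: "\<bar>Re (g z' x)\<bar> \<le> B0" for x
      using abs_Re_le_cmod[of "g z' x"] g_bound[OF far' eps, of x] B0_def by linarith
    have bI: "\<bar>Im (g z' x)\<bar> \<le> B0" for x
      using abs_Im_le_cmod[of "g z' x"] g_bound[OF far' eps, of x] B0_def by linarith
    have mR: "(\<lambda>x. Re (g z' x)) \<in> borel_measurable borel" by measurable
    have mI: "(\<lambda>x. Im (g z' x)) \<in> borel_measurable borel" by measurable
    have iR: "integral\<^sup>L \<mu> (\<lambda>x. Re (g z' x)) = Re (G z')" by (simp add: G_def integral_Re[OF gi])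
    have iI: "integral\<^sup>L \<mu> (\<lambda>x. Im (g z' x)) = Im (G z')" by (simp add: G_def integral_Im[OF gi])
    have 1: "AE \<omega> in P. eventually (\<lambda>n. \<bar>(\<Sum>i<n. Re (g z' (X i \<omega>))) / real n - Re (G z')\<bar> < c / 16) sequentially"
      using LLN[OF assms(5) assms(6) assms(7) assms(8) mR bR B0 c16] by (simp only: iR)
    have 2: "AE \<omega> in P. eventually (\<lambda>n. \<bar>(\<Sum>i<n. Im (g z' (X i \<omega>))) / real n - Im (G z')\<bar> < c / 16) sequentially"
      using LLN[OF assms(5) assms(6) assms(7) assms(8) mI bI B0 c16] by (simp only: iI)
    have "AE \<omega> in P. eventually (\<lambda>n. \<bar>(\<Sum>i<n. Re (g z' (X i \<omega>))) / real n - Re (G z')\<bar> < c / 16) sequentially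
       \<and> eventually (\<lambda>n. \<bar>(\<Sum>i<n. Im (g z' (X i \<omega>))) / real n - Im (G z')\<bar> < c / 16) sequentially"
      using 1 2 by (simp add: AE_conj_iff)
    thus "AE \<omega> in P. eventually (\<lambda>n.
      \<bar>(\<Sum>i<n. Re (g z' (X i \<omega>))) / real n - Re (G z')\<bar> < c / 16 \<and>
      \<bar>(\<Sum>i<n. Im (g z' (X i \<omega>))) / real n - Im (G z')\<bar> < c / 16) sequentially"
      by (rule AE_mp) (auto intro!: AE_I2 eventually_conj)
  qed
  have ae_S: "AE \<omega> in P. \<forall>i. X i \<omega> \<in> S"
  proof -
    have "AE \<omega> in P. X i \<omega> \<in> S" for i
    proof -
      have "AE x in distr P borel (X i). x \<in> S" by (subst assms(8)) (rule supp_AE)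
      moreover have "{x \<in> space borel. x \<in> S} \<in> sets borel" using borel_closed[OF S_closed] by simp
      ultimately show ?thesis by (subst (asm) AE_distr_iff) auto
    qed
    thus ?thesis by (simp add: AE_all_countable)
  qed
  obtain N0 where N0: "\<And>n. n \<ge> N0 \<Longrightarrow> s \<le> k n
            \<and> (\<forall>j\<in>{1..s}. \<xi> n j \<notin> Nbhd \<mu> (3 * \<epsilon>))
            \<and> (\<forall>j\<in>{s+1..k n}. \<xi> n j \<in> Nbhd \<mu> \<epsilon>)"
    using assms(11) by (auto simp: eventually_sequentially)
  define Kc where "Kc = real K + 2 * real K * (2 + 2 * R / \<epsilon>)"
  have Kc0: "Kc \<ge> 0" using R1 eps by (simp add: Kc_def)
  define N1 where "N1 = nat \<lceil>4 * Kc / c\<rceil> + 1"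
  have N1: "Kc / real n \<le> c / 4" if "n \<ge> N1" for n
  proof -
    have "4 * Kc / c \<le> real n" using that unfolding N1_def by linarith
    hence "4 * Kc \<le> c * real n" using c by (simp add: field_simps)
    moreover have "real n > 0" using that unfolding N1_def by simp
    ultimately show ?thesis by (simp add: field_simps)
  qed
  show ?thesis
  proof (intro exI[of _ "1 + 2 / c"] conjI)
    show "1 + 2 / c > 0" using c by (simp add: add_pos_pos)
    have "AE \<omega> in P. (\<forall>i. X i \<omega> \<in> S) \<and> (\<forall>z'\<in>Z. eventually (\<lambda>n.
      \<bar>(\<Sum>i<n. Re (g z' (X i \<omega>))) / real n - Re (G z')\<bar> < c / 16 \<and>
      \<bar>(\<Sum>i<n. Im (g z' (X i \<omega>))) / real n - Im (G z')\<bar> < c / 16) sequentially)"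
      using ae_S ae_close by (simp add: AE_conj_iff)
    thus "AE \<omega> in P. eventually (\<lambda>n.
            (\<forall>z. z \<notin> Nbhd \<mu> (2 * \<epsilon>) \<longrightarrow>
                 invertible_mat (Rmat (Din (\<lambda>i. X i \<omega>) (\<xi> n) (k n) s n) (n - s) n z))
          \<and> (Ffun (Din (\<lambda>i. X i \<omega>) (\<xi> n) (k n) s n) (n - s) n)
               analytic_on (- closure (Nbhd \<mu> (2 * \<epsilon>)))
          \<and> (\<forall>z. z \<notin> Nbhd \<mu> (2 * \<epsilon>) \<longrightarrow>
                 cmod (Ffun (Din (\<lambda>i. X i \<omega>) (\<xi> n) (k n) s n) (n - s) n z) \<le> 1 + 2 / c))
          sequentially"
    proof (rule AE_mp, intro AE_I2 impI)
      fix \<omega> assume H: "(\<forall>i. X i \<omega> \<in> S) \<and> (\<forall>z'\<in>Z. eventually (\<lambda>n.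
        \<bar>(\<Sum>i<n. Re (g z' (X i \<omega>))) / real n - Re (G z')\<bar> < c / 16 \<and>
        \<bar>(\<Sum>i<n. Im (g z' (X i \<omega>))) / real n - Im (G z')\<bar> < c / 16) sequentially)"
      have Xs: "X i \<omega> \<in> S" for i using H by blast
      have ev: "eventually (\<lambda>n. \<forall>z'\<in>Z.
        \<bar>(\<Sum>i<n. Re (g z' (X i \<omega>))) / real n - Re (G z')\<bar> < c / 16 \<and>
        \<bar>(\<Sum>i<n. Im (g z' (X i \<omega>))) / real n - Im (G z')\<bar> < c / 16) sequentially"
        using H Z(1) by (intro eventually_ball_finite) auto
      have ge: "eventually (\<lambda>n. max (max N0 N1) (K + 1) \<le> n) sequentially"
        by (rule eventually_ge_at_top)
      from ev ge show "eventually (\<lambda>n.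
            (\<forall>z. z \<notin> Nbhd \<mu> (2 * \<epsilon>) \<longrightarrow>
                 invertible_mat (Rmat (Din (\<lambda>i. X i \<omega>) (\<xi> n) (k n) s n) (n - s) n z))
          \<and> (Ffun (Din (\<lambda>i. X i \<omega>) (\<xi> n) (k n) s n) (n - s) n)
               analytic_on (- closure (Nbhd \<mu> (2 * \<epsilon>)))
          \<and> (\<forall>z. z \<notin> Nbhd \<mu> (2 * \<epsilon>) \<longrightarrow>
                 cmod (Ffun (Din (\<lambda>i. X i \<omega>) (\<xi> n) (k n) s n) (n - s) n z) \<le> 1 + 2 / c))
          sequentially"
      proof eventually_elim
        case (elim n)
        have nN0: "n \<ge> N0" and nN1: "n \<ge> N1" and nK: "n \<ge> K + 1" using elim(2) by auto
        have n0: "0 < n" using nK by simp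
        have kK: "k n \<le> K" by (rule assms(9))
        have kn: "k n \<le> n" using kK nK by simp
        have sk: "s \<le> k n" using N0[OF nN0] by blast
        have xiN: "\<xi> n j \<in> Nbhd \<mu> \<epsilon>" if "j \<in> {s+1..k n}" for j using N0[OF nN0] that by blast
        have close: "norm ((\<Sum>i<n. z' / (z' - X i \<omega>)) / of_nat n - G z') < c / 8" if z': "z' \<in> Z" for z'
        proof -
          have gX: "g z' (X i \<omega>) = z' / (z' - X i \<omega>)" for i using Xs[of i] by (simp add: g_def)
          define V where "V = (\<Sum>i<n. z' / (z' - X i \<omega>)) / of_nat n - G z'"
          have "Re V = (\<Sum>i<n. Re (g z' (X i \<omega>))) / real n - Re (G z')"
            by (simp add: V_def gX Re_divide_of_nat Re_sum)
          moreover have "Im V = (\<Sum>i<n. Im (g z' (X i \<omega>))) / real n - Im (G z')"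
            by (simp add: V_def gX Im_divide_of_nat Im_sum)
          ultimately have "\<bar>Re V\<bar> < c / 16" "\<bar>Im V\<bar> < c / 16" using elim(1) z' by auto
          hence "norm V < c / 8" using cmod_le[of V] by linarith
          thus ?thesis by (simp add: V_def)
        qed
        have Tlow: "3 * c / 4 \<le> norm ((\<Sum>i<n. z / (z - X i \<omega>)) / of_nat n)"
          if z: "z \<notin> Nbhd \<mu> (2 * \<epsilon>)" for z
        proof (rule Tlow_lemma[OF eps c(1) c(2) n0 _ _ _ Xs close z])
          show "\<And>z'. z' \<in> Z \<Longrightarrow> z' \<notin> Nbhd \<mu> (2 * \<epsilon>)" using Z(2) K0N by blast
          show "\<And>z'. z' \<in> Z \<Longrightarrow> c \<le> norm (G z')" using Z(2) c(3) by blast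
          fix z1 assume z1: "z1 \<notin> Nbhd \<mu> (2 * \<epsilon>)" "norm z1 < 3 * R"
          hence "z1 \<in> K0" by (simp add: K0_def)
          then obtain z' where "z' \<in> Z" "z1 \<in> ball z' \<delta>" using Z(3) by blast
          thus "\<exists>z'\<in>Z. dist z' z1 < c / (8 * (R / \<epsilon>\<^sup>2))" by (auto simp: \<delta>_def L_def)
        qed
        have nbig: "(K + 2 * K * (2 + 2 * R / \<epsilon>)) / n \<le> c / 4"
          using N1[OF nN1] by (simp add: Kc_def)
        show ?case
          by (rule det_core[OF eps c(1) kK sk kn n0 Xs xiN Tlow nbig])
      qed
    qed
  qed
qed

end
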